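(* Let $0<q<1$. Define the $q$-Bernoulli numbers $b_{n,q}$ and $q$-Bernoulli polynomials $B_{n,q}(x)$ by \[ \frac{t}{e_q(t)-1}=\sum_{n=0}^\infty b_{n,q}\frac{t^n}{[n]_q!},\qquad \frac{t}{e_q(t)-1}e_q(tx)=\sum_{n=0}^\infty B_{n,q}(x)\frac{t^n}{[n]_q!} \] (for $t$ in a neighborhood of $0$). Then for every integer $n\ge1$, \[ B_{n,q}(qx)=q^n\left(x-\frac{1}{q[2]_q}\right)B_{n-1,q}(x)-\frac{1}{[n]_q}\sum_{k=0}^{n-2}\begin{bmatrix}n\\k\end{bmatrix}_q q^{k-1}b_{n-k,q}B_{k,q}(x). \]
   Context: $[n]_q=\frac{1-q^n}{1-q}$, $[0]_q!=1$, $[n]_q!=[n]_q\cdots[1]_q$, $\begin{bmatrix}n\\k\end{bmatrix}_q=\frac{[n]_q!}{[k]_q![n-k]_q!}$, and $e_q(t)=\sum_{n\ge0}\frac{t^n}{[n]_q!}$. *)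

theory Defs
  imports Complex_Main
begin

definition qint :: "real \<Rightarrow> nat \<Rightarrow> real" where
  "qint q n = (1 - q ^ n) / (1 - q)"

definition qfact :: "real \<Rightarrow> nat \<Rightarrow> real" where
  "qfact q n = (\<Prod>i\<in>{1..n}. qint q i)"

definition qbinom :: "real \<Rightarrow> nat \<Rightarrow> nat \<Rightarrow> real" where
  "qbinom q n k = qfact q n / (qfact q k * qfact q (n - k))"

definition eq :: "real \<Rightarrow> real \<Rightarrow> real" where
  "eq q t = (\<Sum>n. t ^ n / qfact q n)"

definition qbern_num :: "real \<Rightarrow> nat \<Rightarrow> real" where
  "qbern_num q = (THE b. \<exists>\<epsilon>>0. \<forall>t. t \<noteq> 0 \<and> \<bar>t\<bar> < \<epsilon> \<longrightarrow>
      (\<lambda>n. b n * t ^ n / qfact q n) sums (t / (eq q t - 1)))"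

definition qbern_poly :: "real \<Rightarrow> nat \<Rightarrow> real \<Rightarrow> real" where
  "qbern_poly q = (THE B. \<forall>x. \<exists>\<epsilon>>0. \<forall>t. t \<noteq> 0 \<and> \<bar>t\<bar> < \<epsilon> \<longrightarrow>
      (\<lambda>n. B n x * t ^ n / qfact q n) sums (t / (eq q t - 1) * eq q (t * x)))"

end

theory Submission
  imports Defs "HOL-Analysis.FPS_Convergence"
begin


lemma qint_sum: "q \<noteq> 1 \<Longrightarrow> qint q n = (\<Sum>i<n. q ^ i)"
  by (simp add: qint_def sum_gp_strict)

lemma qint_ge1: "0 < q \<Longrightarrow> q < 1 \<Longrightarrow> n \<ge> 1 \<Longrightarrow> qint q n \<ge> 1"
proof -
  assume a: "0 < q" "q < 1" "n \<ge> 1"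
  have "(\<Sum>i\<in>{0}. q ^ i) \<le> (\<Sum>i<n. q ^ i)"
    by (rule sum_mono2) (use a in auto)
  thus ?thesis using a by (simp add: qint_sum)
qed

lemma qfact_ge1: "0 < q \<Longrightarrow> q < 1 \<Longrightarrow> qfact q n \<ge> 1"
  unfolding qfact_def by (rule prod_ge_1) (auto intro: qint_ge1)

lemma qfact_Suc: "qfact q (Suc n) = qint q (Suc n) * qfact q n"
  unfolding qfact_def by (simp add: prod.atLeast1_atMost_eq prod.lessThan_Suc mult.commute)

lemma qfact_0 [simp]: "qfact q 0 = 1" by (simp add: qfact_def)

lemma qint_mult: "q < 1 \<Longrightarrow> (1 - q) * qint q n = 1 - q ^ n"
  by (simp add: qint_def)

definition qE :: "real \<Rightarrow> real fps" where "qE q = Abs_fps (\<lambda>n. 1 / qfact q n)"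
definition qG :: "real \<Rightarrow> real fps" where "qG q = Abs_fps (\<lambda>n. 1 / qfact q (Suc n))"
definition scl :: "real \<Rightarrow> real fps \<Rightarrow> real fps" where "scl c f = Abs_fps (\<lambda>n. c ^ n * fps_nth f n)"

lemma scl_nth [simp]: "fps_nth (scl c f) n = c ^ n * fps_nth f n" by (simp add: scl_def)

lemma scl_mult: "scl c (f * g) = scl c f * scl c g"
proof (rule fps_ext)
  fix n
  have "c ^ n * (\<Sum>i=0..n. fps_nth f i * fps_nth g (n - i)) = (\<Sum>i=0..n. (c ^ i * fps_nth f i) * (c ^ (n - i) * fps_nth g (n - i)))"
    unfolding sum_distrib_left
    by (intro sum.cong refl) (simp add: algebra_simps power_add [symmetric])
  thus "fps_nth (scl c (f * g)) n = fps_nth (scl c f * scl c g) n" by (simp add: fps_mult_nth)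
qed

lemma scl_one [simp]: "scl c 1 = 1" by (rule fps_ext) simp
lemma scl_diff: "scl c (f - g) = scl c f - scl c g" by (rule fps_ext) (simp add: algebra_simps)
lemma scl_X: "scl c fps_X = fps_const c * fps_X"
  by (rule fps_ext) (subgoal_tac "n = 0 \<or> n = 1 \<or> n > 1", auto)
lemma scl_const: "scl c (fps_const d) = fps_const d"
  by (rule fps_ext) (subgoal_tac "n = 0 \<or> n > 0", auto)
lemma scl_scl: "scl c (scl d f) = scl (c * d) f" by (rule fps_ext) (simp add: power_mult_distrib)

lemma XG: "fps_X * qG q = qE q - 1"
  by (rule fps_ext) (simp add: qG_def qE_def fps_X_mult_nth)

lemma Ekey: assumes "0 < q" "q < 1"
  shows "qE q - scl q (qE q) = fps_const (1 - q) * fps_X * qE q"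
proof (rule fps_ext)
  fix n show "fps_nth (qE q - scl q (qE q)) n = fps_nth (fps_const (1 - q) * fps_X * qE q) n"
  proof (cases n)
    case 0 thus ?thesis by (simp add: qE_def)
  next
    case (Suc m)
    have f: "qfact q m > 0" "qint q (Suc m) > 0" using qfact_ge1[OF assms, of m] qint_ge1[OF assms, of "Suc m"] by linarith+
    have e: "(1 - q) * qint q (Suc m) = 1 - q ^ Suc m" using qint_mult[OF assms(2)] .
    have "(1 - q ^ Suc m) / qfact q (Suc m) = ((1 - q) * qint q (Suc m)) / (qint q (Suc m) * qfact q m)"
      by (simp add: qfact_Suc e)
    also have "\<dots> = (1 - q) / qfact q m" using f by simp
    finally have "(1 - q ^ Suc m) / qfact q (Suc m) = (1 - q) / qfact q m" .
    thus ?thesis using Suc by (simp add: qE_def fps_X_mult_nth mult.assoc diff_divide_distrib)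
  qed
qed

definition qH :: "real \<Rightarrow> real fps" where "qH q = inverse (qG q)"

lemma qG0: "q \<noteq> 1 \<Longrightarrow> fps_nth (qG q) 0 = 1" by (simp add: qG_def qfact_def qint_def)

lemma GH: "q \<noteq> 1 \<Longrightarrow> qG q * qH q = 1"
  unfolding qH_def using qG0 by (intro inverse_mult_eq_1') simp

lemma Hkey: assumes "0 < q" "q < 1"
  shows "fps_const (1 - q) * qH q * scl q (qH q) = scl q (qH q) - fps_const q * qH q - fps_const (1 - q) * fps_X * scl q (qH q)"
proof -
  define H where "H = qH q"
  define Hq where "Hq = scl q (qH q)"
  define G where "G = qG q"
  define Gq where "Gq = scl q (qG q)"
  define E where "E = qE q"
  define Eq where "Eq = scl q (qE q)"
  define X where "X = (fps_X :: real fps)"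
  define Q where "Q = fps_const q"
  have q1: "q \<noteq> 1" using assms by simp
  have C: "fps_const (1 - q) = 1 - Q" by (simp add: Q_def)
  have h1: "G * H = 1" using GH[OF q1] H_def G_def by simp
  have h2: "Gq * Hq = 1" using arg_cong[OF GH[OF q1], of "scl q"] by (simp add: scl_mult Gq_def Hq_def)
  have h3: "X * G = E - 1" using XG X_def G_def E_def by simp
  have h4: "Q * X * Gq = Eq - 1" using arg_cong[OF XG, of "scl q"] 
    by (simp add: scl_mult scl_diff scl_X Q_def X_def Gq_def Eq_def)
  have h5: "E - Eq = (1 - Q) * X * E" using Ekey[OF assms] C by (simp add: E_def Eq_def X_def)
  have "X * ((1 - Q) * H * Hq) = X * (Hq - Q * H - (1 - Q) * X * Hq)"
    using h1 h2 h3 h4 h5 by algebra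
  hence "(1 - Q) * H * Hq = Hq - Q * H - (1 - Q) * X * Hq"
    by (simp add: X_def)
  thus ?thesis by (simp add: C H_def Hq_def X_def Q_def)
qed


lemma summable_bounded_coeff:
  fixes a :: "nat \<Rightarrow> real"
  assumes "\<And>n. \<bar>a n\<bar> \<le> 1" "\<bar>z\<bar> < 1"
  shows "summable (\<lambda>n. a n * z ^ n)"
proof (rule summable_comparison_test')
  show "summable (\<lambda>n. \<bar>z\<bar> ^ n)" using assms(2) by (simp add: summable_geometric)
  fix n
  have "\<bar>a n\<bar> * \<bar>z\<bar> ^ n \<le> 1 * \<bar>z\<bar> ^ n" by (rule mult_right_mono) (use assms in auto)
  thus "norm (a n * z ^ n) \<le> \<bar>z\<bar> ^ n" by (simp add: abs_mult power_abs)
qed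

lemma qfact_inv_bound: "0 < q \<Longrightarrow> q < 1 \<Longrightarrow> \<bar>1 / qfact q n\<bar> \<le> 1"
  using qfact_ge1[of q n] by simp

lemma radius_qE: assumes "0 < q" "q < 1" shows "fps_conv_radius (qE q) \<ge> 1"
  unfolding fps_conv_radius_def
proof (rule conv_radius_geI_ex')
  fix r :: real assume r: "0 < r" "ereal r < 1"
  have "summable (\<lambda>n. 1 / qfact q (n) * r ^ n)"
    by (rule summable_bounded_coeff, rule qfact_inv_bound[OF assms]) (use r in auto)
  thus "summable (\<lambda>n. fps_nth (qE q) n * of_real r ^ n)" by (simp add: qE_def)
qed

lemma radius_qG: assumes "0 < q" "q < 1" shows "fps_conv_radius (qG q) \<ge> 1"
  unfolding fps_conv_radius_def
proof (rule conv_radius_geI_ex')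
  fix r :: real assume r: "0 < r" "ereal r < 1"
  have "summable (\<lambda>n. 1 / qfact q (Suc n) * r ^ n)"
    by (rule summable_bounded_coeff, rule qfact_inv_bound[OF assms]) (use r in auto)
  thus "summable (\<lambda>n. fps_nth (qG q) n * of_real r ^ n)" by (simp add: qG_def)
qed

lemma radius_sclE: assumes "0 < q" "q < 1"
  shows "fps_conv_radius (scl x (qE q)) \<ge> 1 / (\<bar>x\<bar> + 1)"
  unfolding fps_conv_radius_def
proof (rule conv_radius_geI_ex')
  fix r :: real assume r: "0 < r" "ereal r < 1 / (\<bar>x\<bar> + 1)"
  hence r': "r * (\<bar>x\<bar> + 1) < 1" by (simp add: field_simps)
  have "\<bar>x * r\<bar> < 1" using r r' by (simp add: abs_mult algebra_simps)
  hence "summable (\<lambda>n. 1 / qfact q n * (x * r) ^ n)"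
    by (intro summable_bounded_coeff qfact_inv_bound assms)
  thus "summable (\<lambda>n. fps_nth (scl x (qE q)) n * of_real r ^ n)"
    by (simp add: qE_def power_mult_distrib mult_ac)
qed

lemma radius_qH: assumes "0 < q" "q < 1" shows "fps_conv_radius (qH q) > 0"
  unfolding qH_def
  using radius_qG[OF assms] qG0[of q] assms
  by (intro fps_conv_radius_inverse_pos) (auto intro: less_le_trans[of 0 1])

lemma eval_qE: "eval_fps (qE q) t = eq q t"
  by (simp add: eval_fps_def eq_def qE_def)

lemma eval_sclE: "eval_fps (scl x (qE q)) t = eq q (t * x)"
  by (simp add: eval_fps_def eq_def qE_def power_mult_distrib mult_ac)

lemma exists_eps:
  assumes "0 < q" "q < 1"
  obtains e where "0 < e" "e \<le> 1" "ereal e < fps_conv_radius (qH q)"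
proof -
  obtain z where z: "0 < ereal z" "ereal z < fps_conv_radius (qH q)"
    using ereal_dense2[OF radius_qH[OF assms]] by blast
  show ?thesis
  proof (cases "z \<le> 1")
    case True thus ?thesis using z by (intro that[of z]) auto
  next
    case False
    hence "ereal 1 < ereal z" by simp
    hence "ereal 1 < fps_conv_radius (qH q)" using z(2) by (rule order.strict_trans)
    thus ?thesis by (intro that[of 1]) auto
  qed
qed

lemma eval_qH:
  assumes "0 < q" "q < 1" "ereal e < fps_conv_radius (qH q)" "e \<le> 1" "t \<noteq> 0" "\<bar>t\<bar> < e"
  shows "eval_fps (qH q) t = t / (eq q t - 1)"
proof -
  have q1: "q \<noteq> 1" using assms by simp
  have rH: "norm t < fps_conv_radius (qH q)" using assms(3,6) by (simp add: less_ereal.simps(1)[symmetric] del: less_ereal.simps)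
  have t1: "\<bar>t\<bar> < 1" using assms by simp
  have rG: "norm t < fps_conv_radius (qG q)" using radius_qG[OF assms(1,2)] t1
    by (metis ereal_less(3) less_ereal.simps(1) order_less_le_trans real_norm_def one_ereal_def)
  have rE: "norm t < fps_conv_radius (qE q)" using radius_qE[OF assms(1,2)] t1
    by (metis ereal_less(3) less_ereal.simps(1) order_less_le_trans real_norm_def one_ereal_def)
  have "eval_fps (qG q * qH q) t = 1" using GH[OF q1] by simp
  hence a: "eval_fps (qG q) t * eval_fps (qH q) t = 1" using eval_fps_mult[OF rG rH] by simp
  have "eval_fps (fps_X * qG q) t = eval_fps (qE q - 1) t" using XG by simp
  hence b: "t * eval_fps (qG q) t = eq q t - 1"
    using eval_fps_mult[OF _ rG, of fps_X] eval_fps_diff[OF rE, of 1] by (simp add: eval_qE)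
  have G0: "eval_fps (qG q) t \<noteq> 0" using a by auto
  have "eq q t - 1 = t * eval_fps (qG q) t" using b by simp
  hence "t / (eq q t - 1) = 1 / eval_fps (qG q) t" using assms(5) G0 by simp
  also have "\<dots> = eval_fps (qH q) t" using a G0 by (simp add: field_simps)
  finally show ?thesis by simp
qed

lemma powser_unique:
  fixes c :: "nat \<Rightarrow> real"
  assumes d: "0 < d" and s: "\<And>t. t \<noteq> 0 \<Longrightarrow> \<bar>t\<bar> < d \<Longrightarrow> (\<lambda>n. c n * t ^ n) sums 0"
  shows "c n = 0"
proof (induction n rule: less_induct)
  case (less n)
  have "(\<lambda>i. c (i + n) * t ^ i) sums 0" if t: "t \<noteq> 0" "\<bar>t\<bar> < d" for t
  proof -
    have z: "(\<Sum>i<n. c i * t ^ i) = 0" using less by simp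
    have "(\<lambda>i. c (i + n) * t ^ (i + n)) sums 0"
      using s[OF t] z by (subst sums_iff_shift) simp
    from sums_divide[OF this, of "t ^ n"]
    show ?thesis using t by (simp add: power_add)
  qed
  hence "((\<lambda>_::real. 0::real) \<longlongrightarrow> c (0 + n)) (at 0)"
    using powser_limit_0_strong[OF d, of "\<lambda>i. c (i+n)" "\<lambda>_. 0"] by auto
  thus ?case using LIM_const_eq by fastforce
qed


lemma coeff_unique:
  assumes q: "0 < q" "q < 1"
    and e1: "0 < e1" "\<forall>t. t \<noteq> 0 \<and> \<bar>t\<bar> < e1 \<longrightarrow> (\<lambda>n. a n * t ^ n / qfact q n) sums f t"
    and e2: "0 < e2" "\<forall>t. t \<noteq> 0 \<and> \<bar>t\<bar> < e2 \<longrightarrow> (\<lambda>n. b n * t ^ n / qfact q n) sums f t"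
  shows "a n = b n"
proof -
  have "(a n - b n) / qfact q n = 0"
  proof (rule powser_unique[of "min e1 e2"])
    show "0 < min e1 e2" using e1 e2 by simp
    fix t :: real assume t: "t \<noteq> 0" "\<bar>t\<bar> < min e1 e2"
    have "(\<lambda>n. a n * t ^ n / qfact q n - b n * t ^ n / qfact q n) sums (f t - f t)"
      using e1 e2 t by (intro sums_diff) auto
    thus "(\<lambda>n. (a n - b n) / qfact q n * t ^ n) sums 0"
      by (simp add: algebra_simps diff_divide_distrib)
  qed
  moreover have "qfact q n \<noteq> 0" using qfact_ge1[OF q, of n] by simp
  ultimately show ?thesis by simp
qed

lemma qbern_num_eq:
  assumes q: "0 < q" "q < 1"
  shows "qbern_num q = (\<lambda>n. qfact q n * fps_nth (qH q) n)"
proof -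
  obtain e where e: "0 < e" "e \<le> 1" "ereal e < fps_conv_radius (qH q)" using exists_eps[OF q] .
  have qf: "qfact q n \<noteq> 0" for n using qfact_ge1[OF q, of n] by simp
  have P: "\<forall>t. t \<noteq> 0 \<and> \<bar>t\<bar> < e \<longrightarrow>
      (\<lambda>n. qfact q n * fps_nth (qH q) n * t ^ n / qfact q n) sums (t / (eq q t - 1))"
  proof (intro allI impI)
    fix t :: real assume t: "t \<noteq> 0 \<and> \<bar>t\<bar> < e"
    have rH: "norm t < fps_conv_radius (qH q)" using e(3) t
      by (metis ereal_less(3) less_ereal.simps(1) order_less_trans real_norm_def)
    have "(\<lambda>n. fps_nth (qH q) n * t ^ n) sums eval_fps (qH q) t" by (rule sums_eval_fps[OF rH])
    thus "(\<lambda>n. qfact q n * fps_nth (qH q) n * t ^ n / qfact q n) sums (t / (eq q t - 1))"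
      using eval_qH[OF q e(3) e(2)] t qf by simp
  qed
  show ?thesis unfolding qbern_num_def
  proof (rule the_equality)
    show "\<exists>\<epsilon>>0. \<forall>t. t \<noteq> 0 \<and> \<bar>t\<bar> < \<epsilon> \<longrightarrow>
      (\<lambda>n. qfact q n * fps_nth (qH q) n * t ^ n / qfact q n) sums (t / (eq q t - 1))"
      using P e(1) by blast
  next
    fix b assume "\<exists>\<epsilon>>0. \<forall>t. t \<noteq> 0 \<and> \<bar>t\<bar> < \<epsilon> \<longrightarrow>
      (\<lambda>n. b n * t ^ n / qfact q n) sums (t / (eq q t - 1))"
    then obtain e2 where e2: "0 < e2" "\<forall>t. t \<noteq> 0 \<and> \<bar>t\<bar> < e2 \<longrightarrow>
      (\<lambda>n. b n * t ^ n / qfact q n) sums (t / (eq q t - 1))" by blast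
    show "b = (\<lambda>n. qfact q n * fps_nth (qH q) n)"
      by (rule ext, rule coeff_unique[OF q e2 e(1) P])
  qed
qed

lemma qbern_poly_eq:
  assumes q: "0 < q" "q < 1"
  shows "qbern_poly q = (\<lambda>n x. qfact q n * fps_nth (qH q * scl x (qE q)) n)"
proof -
  obtain e where e: "0 < e" "e \<le> 1" "ereal e < fps_conv_radius (qH q)" using exists_eps[OF q] .
  have qf: "qfact q n \<noteq> 0" for n using qfact_ge1[OF q, of n] by simp
  have P: "\<forall>t. t \<noteq> 0 \<and> \<bar>t\<bar> < min e (1 / (\<bar>x\<bar> + 1)) \<longrightarrow>
      (\<lambda>n. qfact q n * fps_nth (qH q * scl x (qE q)) n * t ^ n / qfact q n) sums (t / (eq q t - 1) * eq q (t * x))" for x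
  proof (intro allI impI)
    fix t :: real assume t: "t \<noteq> 0 \<and> \<bar>t\<bar> < min e (1 / (\<bar>x\<bar> + 1))"
    have rH: "norm t < fps_conv_radius (qH q)" using e(3) t
      by (metis ereal_less(3) less_ereal.simps(1) min_less_iff_conj order_less_trans real_norm_def)
    have rS: "norm t < fps_conv_radius (scl x (qE q))" using radius_sclE[OF q, of x] t
      by (metis ereal_less(3) less_ereal.simps(1) min_less_iff_conj order_less_le_trans real_norm_def)
    have rP: "norm t < fps_conv_radius (qH q * scl x (qE q))"
      using fps_conv_radius_mult[of "qH q" "scl x (qE q)"] rH rS
      by (metis min_less_iff_conj order_less_le_trans)
    have "(\<lambda>n. fps_nth (qH q * scl x (qE q)) n * t ^ n) sums eval_fps (qH q * scl x (qE q)) t"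
      by (rule sums_eval_fps[OF rP])
    moreover have "eval_fps (qH q * scl x (qE q)) t = t / (eq q t - 1) * eq q (t * x)"
      using eval_fps_mult[OF rH rS] eval_qH[OF q e(3) e(2)] t eval_sclE by simp
    ultimately show "(\<lambda>n. qfact q n * fps_nth (qH q * scl x (qE q)) n * t ^ n / qfact q n) sums (t / (eq q t - 1) * eq q (t * x))"
      using qf by simp
  qed
  have P': "\<exists>\<epsilon>>0. \<forall>t. t \<noteq> 0 \<and> \<bar>t\<bar> < \<epsilon> \<longrightarrow>
      (\<lambda>n. qfact q n * fps_nth (qH q * scl x (qE q)) n * t ^ n / qfact q n) sums (t / (eq q t - 1) * eq q (t * x))" for x
    using P[of x] e(1) by (intro exI[of _ "min e (1 / (\<bar>x\<bar> + 1))"]) (auto simp: add_pos_nonneg)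
  show ?thesis unfolding qbern_poly_def
  proof (rule the_equality)
    show "\<forall>x. \<exists>\<epsilon>>0. \<forall>t. t \<noteq> 0 \<and> \<bar>t\<bar> < \<epsilon> \<longrightarrow>
      (\<lambda>n. qfact q n * fps_nth (qH q * scl x (qE q)) n * t ^ n / qfact q n) sums (t / (eq q t - 1) * eq q (t * x))"
      using P' by blast
  next
    fix B assume B: "\<forall>x. \<exists>\<epsilon>>0. \<forall>t. t \<noteq> 0 \<and> \<bar>t\<bar> < \<epsilon> \<longrightarrow>
      (\<lambda>n. B n x * t ^ n / qfact q n) sums (t / (eq q t - 1) * eq q (t * x))"
    show "B = (\<lambda>n x. qfact q n * fps_nth (qH q * scl x (qE q)) n)"
    proof (intro ext)
      fix n x
      obtain e2 where e2: "0 < e2" "\<forall>t. t \<noteq> 0 \<and> \<bar>t\<bar> < e2 \<longrightarrow>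
        (\<lambda>n. B n x * t ^ n / qfact q n) sums (t / (eq q t - 1) * eq q (t * x))" using B by blast
      obtain e1 where e1: "0 < e1" "\<forall>t. t \<noteq> 0 \<and> \<bar>t\<bar> < e1 \<longrightarrow>
        (\<lambda>n. qfact q n * fps_nth (qH q * scl x (qE q)) n * t ^ n / qfact q n) sums (t / (eq q t - 1) * eq q (t * x))"
        using P'[of x] by blast
      show "B n x = qfact q n * fps_nth (qH q * scl x (qE q)) n"
        using coeff_unique[OF q e2 e1] .
    qed
  qed
qed


lemma h01: assumes q: "0 < q" "q < 1"
  shows "fps_nth (qH q) 0 = 1" "fps_nth (qH q) 1 = - 1 / (1 + q)"
proof -
  have q1: "q \<noteq> 1" using q by simp
  have qi1: "qint q 1 = 1" using q1 by (simp add: qint_def)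
  have qi2: "qint q 2 = 1 + q" using q1 by (simp add: qint_def field_simps power2_eq_square)
  have qf2: "qfact q 2 = 1 + q" using qfact_Suc[of q 1] qfact_Suc[of q 0] qi1 qi2
    by (simp add: numeral_2_eq_2)
  have c0: "fps_nth (qG q * qH q) 0 = 1" using GH[OF q1] by simp
  thus h0: "fps_nth (qH q) 0 = 1" using qG0[OF q1] by (simp add: fps_mult_nth)
  have "fps_nth (qG q * qH q) 1 = 0" using GH[OF q1] by simp
  hence "fps_nth (qG q) 0 * fps_nth (qH q) 1 + fps_nth (qG q) 1 * fps_nth (qH q) 0 = 0"
    by (simp add: fps_mult_nth)
  hence "fps_nth (qH q) 1 + 1 / (1 + q) = 0" using qG0[OF q1] h0 qf2
    by (simp add: qG_def numeral_2_eq_2)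
  thus "fps_nth (qH q) 1 = - 1 / (1 + q)" by (simp add: eq_neg_iff_add_eq_0)
qed

lemma final_alg:
  fixes q x bm bm1 T g A N Y u v w :: real
  assumes u: "u * (1 + q) = 1" and v: "v * q = 1" and w: "w * (1 - q) = 1"
    and N: "(1 - q) * N = 1 - q * Y"
    and A: "A = T + Y * (- u) * bm + q * Y * bm1"
    and hA: "(1 - q) * A = q * Y * bm1 - q * bm1 + (1 - q) * q * x * bm - (1 - q) * Y * bm"
    and g: "g = bm1 - (1 - q) * x * bm"
  shows "N * g = q * Y * x * bm - Y * u * bm - T * v"
  using u v w N A hA g by algebra

lemma fps_identity:
  fixes q x :: real
  assumes q: "0 < q" "q < 1"
  defines "P \<equiv> qH q * scl x (qE q)"
  defines "S \<equiv> scl q P"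
  shows "fps_const (1 - q) * (S * qH q) = S - fps_const q * P + fps_const ((1 - q) * q * x) * (fps_X * P)
            - fps_const (1 - q) * (fps_X * S)"
    and "qH q * scl (q * x) (qE q) = P - fps_const ((1 - q) * x) * (fps_X * P)"
proof -
  have sE: "scl q (qE q) = qE q * (1 - fps_const (1 - q) * fps_X)"
    using Ekey[OF q] by (simp add: algebra_simps)
  have sxq: "scl (q * x) (qE q) = scl x (qE q) * (1 - fps_const (1 - q) * fps_const x * fps_X)"
  proof -
    have "scl (q * x) (qE q) = scl x (scl q (qE q))" by (simp add: scl_scl mult.commute)
    also have "\<dots> = scl x (qE q) * (1 - fps_const (1 - q) * fps_const x * fps_X)"
      unfolding sE by (simp add: scl_mult scl_diff scl_X scl_const mult.assoc)
    finally show ?thesis .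
  qed
  have Sdef: "S = scl q (qH q) * scl x (qE q) * (1 - fps_const (1 - q) * fps_const x * fps_X)"
    unfolding S_def P_def scl_mult scl_scl
    by (simp add: sxq mult.commute mult.left_commute)
  define H Hq Ex X Q Xc where "H = qH q" and "Hq = scl q (qH q)" and "Ex = scl x (qE q)"
    and "X = (fps_X :: real fps)" and "Q = fps_const q" and "Xc = fps_const x"
  have C: "fps_const (1 - q) = 1 - Q" by (simp add: Q_def)
  have K: "(1 - Q) * H * Hq = Hq - Q * H - (1 - Q) * X * Hq"
    unfolding C[symmetric] unfolding H_def Hq_def X_def Q_def by (rule Hkey[OF q])
  have S': "S = Hq * Ex * (1 - (1 - Q) * Xc * X)" using Sdef by (simp add: C Hq_def Ex_def Xc_def X_def)
  have P': "P = H * Ex" by (simp add: P_def H_def Ex_def)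
  have "(1 - Q) * (S * H) = S - Q * P + (1 - Q) * Q * Xc * (X * P) - (1 - Q) * (X * S)"
    using K S' P' by algebra
  thus "fps_const (1 - q) * (S * qH q) = S - fps_const q * P + fps_const ((1 - q) * q * x) * (fps_X * P)
            - fps_const (1 - q) * (fps_X * S)"
    by (simp add: C H_def X_def Q_def Xc_def fps_const_mult[symmetric] del: fps_const_mult)
  show "qH q * scl (q * x) (qE q) = P - fps_const ((1 - q) * x) * (fps_X * P)"
    unfolding sxq P_def by (simp add: algebra_simps fps_const_mult[symmetric] del: fps_const_mult)
qed


theorem theorem3:
  fixes q x :: real and n :: nat
  assumes "0 < q" "q < 1" "n \<ge> 1"
  shows "qbern_poly q n (q * x) =
    q ^ n * (x - 1 / (q * qint q 2)) * qbern_poly q (n - 1) x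
    - 1 / qint q n * (\<Sum>k<n - 1. qbinom q n k * q powi (int k - 1)
        * qbern_num q (n - k) * qbern_poly q k x)"
proof -
  have q: "0 < q" "q < 1" using assms by auto
  obtain m where n: "n = Suc m" using assms(3) by (cases n) auto
  define P where "P = qH q * scl x (qE q)"
  define S where "S = scl q P"
  define \<beta> where "\<beta> i = fps_nth P i" for i
  define h where "h i = fps_nth (qH q) i" for i
  define T where "T = (\<Sum>k<m. q ^ k * \<beta> k * h (Suc m - k))"
  define A where "A = fps_nth (S * qH q) (Suc m)"
  define \<gamma> where "\<gamma> = \<beta> (Suc m) - (1 - q) * x * \<beta> m"
  define N where "N = qint q (Suc m)"
  define u where "u = 1 / (1 + q)"
  define v where "v = 1 / q"
  define w where "w = 1 / (1 - q)"
  have qf: "qfact q i \<noteq> 0" for i using qfact_ge1[OF q, of i] by simp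
  have q0: "q \<noteq> 0" "1 + q \<noteq> 0" "1 - q \<noteq> 0" using q by auto
  have uvw: "u * (1 + q) = 1" "v * q = 1" "w * (1 - q) = 1" using q0 by (auto simp: u_def v_def w_def)
  have N: "(1 - q) * N = 1 - q * q ^ m" unfolding N_def using qint_mult[OF q(2), of "Suc m"] by simp
  have N0: "N \<noteq> 0" using qint_ge1[OF q, of "Suc m"] by (simp add: N_def)
  have qi2: "qint q 2 = 1 + q" using q0 by (simp add: qint_def field_simps power2_eq_square)
  have hA: "(1 - q) * A = q * q ^ m * \<beta> (Suc m) - q * \<beta> (Suc m) + (1 - q) * q * x * \<beta> m - (1 - q) * q ^ m * \<beta> m"
  proof -
    have "fps_nth (fps_const (1 - q) * (S * qH q)) (Suc m) = fps_nth (S - fps_const q * P + fps_const ((1 - q) * q * x) * (fps_X * P)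
            - fps_const (1 - q) * (fps_X * S)) (Suc m)"
      using fps_identity(1)[OF q, of x] by (simp add: S_def P_def)
    hence "(1 - q) * fps_nth (S * qH q) (Suc m) = fps_nth S (Suc m) - q * fps_nth P (Suc m)
       + (1 - q) * q * x * fps_nth P m - (1 - q) * fps_nth S m"
      by (simp del: fps_const_mult)
    thus ?thesis by (simp add: A_def S_def \<beta>_def algebra_simps)
  qed
  have Aeq: "A = T + q ^ m * (- u) * \<beta> m + q * q ^ m * \<beta> (Suc m)"
  proof -
    have "A = (\<Sum>i\<le>Suc m. q ^ i * \<beta> i * h (Suc m - i))"
      by (simp add: A_def fps_mult_nth atLeast0AtMost S_def \<beta>_def h_def)
    also have "\<dots> = T + q ^ m * \<beta> m * h 1 + q ^ Suc m * \<beta> (Suc m) * h 0"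
      by (simp add: T_def lessThan_Suc_atMost[symmetric] Suc_diff_le)
    finally show ?thesis using h01[OF q] by (simp add: h_def u_def)
  qed
  have fin: "N * \<gamma> = q * q ^ m * x * \<beta> m - q ^ m * u * \<beta> m - T * v"
    by (rule final_alg[OF uvw N _ hA]) (simp_all add: Aeq \<gamma>_def)
  have lhs: "qbern_poly q n (q * x) = qfact q (Suc m) * \<gamma>"
  proof -
    have "qbern_poly q n (q * x) = qfact q (Suc m) * fps_nth (qH q * scl (q * x) (qE q)) (Suc m)"
      by (simp add: qbern_poly_eq[OF q] n)
    also have "fps_nth (qH q * scl (q * x) (qE q)) (Suc m) = \<gamma>"
      unfolding fps_identity(2)[OF q, of x] by (simp add: \<gamma>_def \<beta>_def P_def)
    finally show ?thesis .
  qed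
  have sum: "(\<Sum>k<n - 1. qbinom q n k * q powi (int k - 1) * qbern_num q (n - k) * qbern_poly q k x)
      = qfact q (Suc m) * v * T"
    unfolding T_def sum_distrib_left n diff_Suc_1
  proof (intro sum.cong refl)
    fix k assume k: "k \<in> {..<m}"
    have b: "qbinom q (Suc m) k * qfact q (Suc m - k) * qfact q k = qfact q (Suc m)"
      using qf by (simp add: qbinom_def)
    have p: "q powi (int k - 1) = q ^ k * v"
      using q0 by (simp add: power_int_diff v_def)
    show "qbinom q (Suc m) k * q powi (int k - 1) * qbern_num q (Suc m - k) * qbern_poly q k x =
          qfact q (Suc m) * v * (q ^ k * \<beta> k * h (Suc m - k))"
      unfolding qbern_num_eq[OF q] qbern_poly_eq[OF q] p
      using b by (simp add: \<beta>_def h_def P_def algebra_simps)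
  qed
  have rest: "qbern_poly q (n - 1) x = qfact q m * \<beta> m"
    by (simp add: qbern_poly_eq[OF q] n \<beta>_def P_def)
  have fS: "qfact q (Suc m) = N * qfact q m" by (simp add: qfact_Suc N_def)
  have final: "qfact q (Suc m) * \<gamma> = q ^ Suc m * (x - 1 / (q * (1 + q))) * (qfact q m * \<beta> m) - 1 / N * (qfact q (Suc m) * v * T)"
  proof -
    have "qfact q (Suc m) * \<gamma> = qfact q m * (N * \<gamma>)" by (simp add: fS)
    also have "\<dots> = qfact q m * (q * q ^ m * x * \<beta> m - q ^ m * u * \<beta> m - T * v)" by (simp add: fin)
    also have "\<dots> = q ^ Suc m * (x - 1 / (q * (1 + q))) * (qfact q m * \<beta> m) - 1 / N * (qfact q (Suc m) * v * T)"
    proof -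
      have qq: "q + q * q \<noteq> 0" "q * (1 + q) \<noteq> 0" using q by (smt (verit) mult_pos_pos)+
      have a1: "1 / N * (qfact q (Suc m) * v * T) = qfact q m * (T * v)" using N0 by (simp add: fS)
      have a2: "q ^ Suc m * (1 / (q * (1 + q))) = q ^ m * u" using q0 by (simp add: u_def)
      have a3: "q ^ Suc m * (x - 1 / (q * (1 + q))) * (qfact q m * \<beta> m) =
          q ^ Suc m * x * (qfact q m * \<beta> m) - (q ^ Suc m * (1 / (q * (1 + q)))) * (qfact q m * \<beta> m)"
        by (simp only: right_diff_distrib left_diff_distrib mult.assoc)
      show ?thesis unfolding a3 a1 a2 by (simp add: algebra_simps)
    qed
    finally show ?thesis .
  qed
  show ?thesis unfolding lhs sum rest qi2 using final n by (simp add: N_def)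
qed

end
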